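(* Let $F=(\langle a_\alpha,b_\alpha,F_\alpha\rangle)_{\alpha\in A}$ be an ordinal sum of t-subnorms which is a t-norm, $f:[0,1]\to[0,1]$ strictly increasing with $B_A^f\ne\emptyset$, $\{f_\beta\}_{\beta\in B_A^f}$ the decomposition set of $f$, $T(x,y)=f^{(-1)}(F(f(x),f(y)))$, and for $\beta\in B_A^f$ and $x,y\in[s_\beta,t_\beta]$, $T^\beta(x,y)=f_\beta^{(-1)}(F^\beta(f_\beta(x),f_\beta(y)))$ and $\underline T^\beta(x,y)=f_\beta^{(-1)}(\underline F^\beta(f_\beta(x),f_\beta(y)))$, where $\underline F^\beta(x,y)=F^\beta(x,y)$ for $(x,y)\in[a_\beta,b_\beta)^2$ and $\underline F^\beta(x,y)=\min\{x,y\}$ for $(x,y)\in[a_\beta,b_\beta]^2\setminus[a_\beta,b_\beta)^2$. Let $\beta\in B_A^f$. (i) If $F_\beta$ is a t-norm, then $T(x,y)=T^\beta(x,y)$ for all $x,y\in[s_\beta,t_\beta]$ with $(x,y)\ne(s_\beta,s_\beta)$. (ii) If $F_\beta$ is a proper t-subnorm, then: (a) if $f(t_\beta)\le b_\beta$, $T(x,y)=T^\beta(x,y)$ for all $x,y\in[s_\beta,t_\beta]$ with $(x,y)\ne(s_\beta,s_\beta)$; (b) if $f(t_\beta)>b_\beta$, $T(x,y)=\underline T^\beta(x,y)$ for all $x,y\in[s_\beta,t_\beta]$ with $(x,y)\ne(s_\beta,s_\beta)$.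
   Context: A t-norm is a commutative, associative map $[0,1]^2\to[0,1]$, non-decreasing in each variable, with neutral element $1$; a t-subnorm is commutative, associative, non-decreasing with $G(x,y)\le\min\{x,y\}$; proper means not a t-norm. For a non-decreasing $g:[p,q]\to[u,v]$, $g^{(-1)}(y)=\sup\{x\in[p,q]:g(x)<y\}$ with $\sup\emptyset=p$. Ordinal sum of t-subnorms: $A\ne\emptyset$ totally ordered, $(a_\alpha,b_\alpha)$ pairwise disjoint non-empty open subintervals of $[0,1]$, $F_\alpha$ t-subnorms, and $F(x,y)=a_\alpha+(b_\alpha-a_\alpha)F_\alpha(\frac{x-a_\alpha}{b_\alpha-a_\alpha},\frac{y-a_\alpha}{b_\alpha-a_\alpha})$ if $(x,y)\in(a_\alpha,b_\alpha]^2$, $\min\{x,y\}$ otherwise; $F$ is assumed to be a t-norm. $F^\alpha(x,y)=a_\alpha+(b_\alpha-a_\alpha)F_\alpha(\frac{x-a_\alpha}{b_\alpha-a_\alpha},\frac{y-a_\alpha}{b_\alpha-a_\alpha})$ for $x,y\in[a_\alpha,b_\alpha]$. $s_\alpha=\inf\{x\in[0,1]:f(x)\ge a_\alpha\}$, $t_\alpha=\sup\{x\in[0,1]:f(x)\le b_\alpha\}$ ($\inf\emptyset=1,\sup\emptyset=0$); $B_A^f=\{\beta\in A:s_\beta<t_\beta\}$. Decomposition set: $f_\beta:[s_\beta,t_\beta]\to[a_\beta,b_\beta]$ with $f_\beta=f$ on $(s_\beta,t_\beta)$, $f_\beta(s_\beta)=f(s_\beta)$ if $f(s_\beta)\ge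 a_\beta$ else $a_\beta$, $f_\beta(t_\beta)=f(t_\beta)$ if $f(t_\beta)\le b_\beta$ else $b_\beta$. *)

theory Defs
  imports Complex_Main
begin


text \<open>t-norm on [0,1] (functions real => real => real, only values on [0,1]^2 matter).\<close>
definition tnorm :: "(real \<Rightarrow> real \<Rightarrow> real) \<Rightarrow> bool" where
  "tnorm G \<longleftrightarrow>
     (\<forall>x\<in>{0..1}. \<forall>y\<in>{0..1}. G x y \<in> {0..1}) \<and>
     (\<forall>x\<in>{0..1}. \<forall>y\<in>{0..1}. G x y = G y x) \<and>
     (\<forall>x\<in>{0..1}. \<forall>y\<in>{0..1}. \<forall>z\<in>{0..1}. G (G x y) z = G x (G y z)) \<and>
     (\<forall>x\<in>{0..1}. \<forall>x'\<in>{0..1}. \<forall>y\<in>{0..1}. x \<le> x' \<longrightarrow> G x y \<le> G x' y) \<and>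
     (\<forall>x\<in>{0..1}. G x 1 = x)"

definition tsubnorm :: "(real \<Rightarrow> real \<Rightarrow> real) \<Rightarrow> bool" where
  "tsubnorm G \<longleftrightarrow>
     (\<forall>x\<in>{0..1}. \<forall>y\<in>{0..1}. G x y \<in> {0..1}) \<and>
     (\<forall>x\<in>{0..1}. \<forall>y\<in>{0..1}. G x y = G y x) \<and>
     (\<forall>x\<in>{0..1}. \<forall>y\<in>{0..1}. \<forall>z\<in>{0..1}. G (G x y) z = G x (G y z)) \<and>
     (\<forall>x\<in>{0..1}. \<forall>x'\<in>{0..1}. \<forall>y\<in>{0..1}. x \<le> x' \<longrightarrow> G x y \<le> G x' y) \<and>
     (\<forall>x\<in>{0..1}. \<forall>y\<in>{0..1}. G x y \<le> min x y)"

definition proper_tsubnorm :: "(real \<Rightarrow> real \<Rightarrow> real) \<Rightarrow> bool" where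
  "proper_tsubnorm G \<longleftrightarrow> tsubnorm G \<and> \<not> tnorm G"

definition summand :: "('i \<Rightarrow> real) \<Rightarrow> ('i \<Rightarrow> real) \<Rightarrow> ('i \<Rightarrow> real \<Rightarrow> real \<Rightarrow> real)
    \<Rightarrow> 'i \<Rightarrow> real \<Rightarrow> real \<Rightarrow> real" where
  "summand a b Fs \<alpha> x y =
     a \<alpha> + (b \<alpha> - a \<alpha>) * Fs \<alpha> ((x - a \<alpha>) / (b \<alpha> - a \<alpha>)) ((y - a \<alpha>) / (b \<alpha> - a \<alpha>))"

definition summand_low :: "('i \<Rightarrow> real) \<Rightarrow> ('i \<Rightarrow> real) \<Rightarrow> ('i \<Rightarrow> real \<Rightarrow> real \<Rightarrow> real)
    \<Rightarrow> 'i \<Rightarrow> real \<Rightarrow> real \<Rightarrow> real" where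
  "summand_low a b Fs \<alpha> x y =
     (if x < b \<alpha> \<and> y < b \<alpha> then summand a b Fs \<alpha> x y else min x y)"

definition ordinal_sum :: "'i set \<Rightarrow> ('i \<Rightarrow> real) \<Rightarrow> ('i \<Rightarrow> real) \<Rightarrow> ('i \<Rightarrow> real \<Rightarrow> real \<Rightarrow> real)
    \<Rightarrow> real \<Rightarrow> real \<Rightarrow> real" where
  "ordinal_sum A a b Fs x y =
     (if \<exists>\<alpha>\<in>A. x \<in> {a \<alpha><..b \<alpha>} \<and> y \<in> {a \<alpha><..b \<alpha>}
      then summand a b Fs (SOME \<alpha>. \<alpha> \<in> A \<and> x \<in> {a \<alpha><..b \<alpha>} \<and> y \<in> {a \<alpha><..b \<alpha>}) x y
      else min x y)"

definition pinv :: "real \<Rightarrow> real \<Rightarrow> (real \<Rightarrow> real) \<Rightarrow> real \<Rightarrow> real" where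
  "pinv p q g y = (if {x \<in> {p..q}. g x < y} = {} then p else Sup {x \<in> {p..q}. g x < y})"

definition s_pt :: "(real \<Rightarrow> real) \<Rightarrow> ('i \<Rightarrow> real) \<Rightarrow> 'i \<Rightarrow> real" where
  "s_pt f a \<beta> = (if {x \<in> {0..1}. a \<beta> \<le> f x} = {} then 1 else Inf {x \<in> {0..1}. a \<beta> \<le> f x})"

definition t_pt :: "(real \<Rightarrow> real) \<Rightarrow> ('i \<Rightarrow> real) \<Rightarrow> 'i \<Rightarrow> real" where
  "t_pt f b \<beta> = (if {x \<in> {0..1}. f x \<le> b \<beta>} = {} then 0 else Sup {x \<in> {0..1}. f x \<le> b \<beta>})"

definition B_set :: "'i set \<Rightarrow> (real \<Rightarrow> real) \<Rightarrow> ('i \<Rightarrow> real) \<Rightarrow> ('i \<Rightarrow> real) \<Rightarrow> 'i set" where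
  "B_set A f a b = {\<beta> \<in> A. s_pt f a \<beta> < t_pt f b \<beta>}"

definition decomp :: "(real \<Rightarrow> real) \<Rightarrow> ('i \<Rightarrow> real) \<Rightarrow> ('i \<Rightarrow> real) \<Rightarrow> 'i \<Rightarrow> real \<Rightarrow> real" where
  "decomp f a b \<beta> x =
     (if x = s_pt f a \<beta> then (if a \<beta> \<le> f (s_pt f a \<beta>) then f (s_pt f a \<beta>) else a \<beta>)
      else if x = t_pt f b \<beta> then (if f (t_pt f b \<beta>) \<le> b \<beta> then f (t_pt f b \<beta>) else b \<beta>)
      else f x)"

definition Tgen :: "'i set \<Rightarrow> ('i \<Rightarrow> real) \<Rightarrow> ('i \<Rightarrow> real) \<Rightarrow> ('i \<Rightarrow> real \<Rightarrow> real \<Rightarrow> real)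
    \<Rightarrow> (real \<Rightarrow> real) \<Rightarrow> real \<Rightarrow> real \<Rightarrow> real" where
  "Tgen A a b Fs f x y = pinv 0 1 f (ordinal_sum A a b Fs (f x) (f y))"

definition Tbeta :: "('i \<Rightarrow> real) \<Rightarrow> ('i \<Rightarrow> real) \<Rightarrow> ('i \<Rightarrow> real \<Rightarrow> real \<Rightarrow> real)
    \<Rightarrow> (real \<Rightarrow> real) \<Rightarrow> 'i \<Rightarrow> real \<Rightarrow> real \<Rightarrow> real" where
  "Tbeta a b Fs f \<beta> x y =
     pinv (s_pt f a \<beta>) (t_pt f b \<beta>) (decomp f a b \<beta>)
       (summand a b Fs \<beta> (decomp f a b \<beta> x) (decomp f a b \<beta> y))"

definition Tbeta_low :: "('i \<Rightarrow> real) \<Rightarrow> ('i \<Rightarrow> real) \<Rightarrow> ('i \<Rightarrow> real \<Rightarrow> real \<Rightarrow> real)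
    \<Rightarrow> (real \<Rightarrow> real) \<Rightarrow> 'i \<Rightarrow> real \<Rightarrow> real \<Rightarrow> real" where
  "Tbeta_low a b Fs f \<beta> x y =
     pinv (s_pt f a \<beta>) (t_pt f b \<beta>) (decomp f a b \<beta>)
       (summand_low a b Fs \<beta> (decomp f a b \<beta> x) (decomp f a b \<beta> y))"

end

theory Submission
  imports Defs
begin


lemma pinv_transfer:
  fixes f g :: "real \<Rightarrow> real"
  assumes s0: "0 \<le> s" and st: "s < t" and t1: "t \<le> 1"
    and hA: "\<And>z. 0 \<le> z \<Longrightarrow> z \<le> 1 \<Longrightarrow> z \<noteq> s \<Longrightarrow> (f z < w \<longleftrightarrow> (z < s \<or> (s < z \<and> z \<le> t \<and> g z < w')))"
    and hs: "g s < w' \<Longrightarrow> f s < w"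
  shows "pinv 0 1 f w = pinv s t g w'"
proof -
  define S where "S = {x \<in> {0..1}. f x < w}"
  define S' where "S' = {x \<in> {s..t}. g x < w'}"
  have p1: "pinv 0 1 f w = (if S = {} then 0 else Sup S)" unfolding pinv_def S_def ..
  have p2: "pinv s t g w' = (if S' = {} then s else Sup S')" unfolding pinv_def S'_def ..
  have sub: "S' \<subseteq> S"
  proof
    fix z assume z: "z \<in> S'"
    show "z \<in> S"
    proof (cases "z = s")
      case True thus ?thesis using z hs s0 st t1 by (auto simp: S_def S'_def)
    next
      case False thus ?thesis using z hA[of z] s0 st t1 by (auto simp: S_def S'_def)
    qed
  qed
  have sub2: "S \<subseteq> {0..s} \<union> S'"
  proof
    fix z assume z: "z \<in> S"
    show "z \<in> {0..s} \<union> S'"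
    proof (cases "z = s")
      case True thus ?thesis using z s0 by (auto simp: S_def)
    next
      case False thus ?thesis using z hA[of z] by (auto simp: S_def S'_def)
    qed
  qed
  have low: "{0..<s} \<subseteq> S"
  proof
    fix z assume z: "z \<in> {0..<s}"
    then have "f z < w" using hA[of z] st t1 by auto
    thus "z \<in> S" using z st t1 by (auto simp: S_def)
  qed
  have bS: "bdd_above S" unfolding S_def by (rule bdd_aboveI[of _ 1]) auto
  have bS': "bdd_above S'" unfolding S'_def by (rule bdd_aboveI[of _ t]) auto
  show ?thesis
  proof (cases "S' = {}")
    case True
    then have r: "pinv s t g w' = s" using p2 by simp
    show ?thesis
    proof (cases "S = {}")
      case True
      then have "s = 0" using low s0 by (metis atLeastLessThan_empty_iff2 empty_iff subset_empty order.not_eq_order_implies_strict less_eq_real_def atLeastLessThan_iff)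
      then show ?thesis using True r p1 by simp
    next
      case False
      have "Sup S \<le> s" using False sub2 \<open>S' = {}\<close> by (intro cSup_least) auto
      moreover have "s \<le> Sup S"
      proof (rule dense_le)
        fix y assume y: "y < s"
        obtain z0 where z0: "z0 \<in> S" using False by auto
        have "0 \<le> Sup S" using z0 bS cSup_upper[of z0 S] by (auto simp: S_def)
        show "y \<le> Sup S"
        proof (cases "y < 0")
          case True thus ?thesis using \<open>0 \<le> Sup S\<close> by simp
        next
          case False
          then have "y \<in> S" using low y by auto
          thus ?thesis using bS cSup_upper by blast
        qed
      qed
      ultimately have "Sup S = s" by simp
      then show ?thesis using r False p1 by simp
    qed
  next
    case False
    have nS: "S \<noteq> {}" using False sub by auto
    have "Sup S' \<le> Sup S" using False bS sub by (rule cSup_subset_mono)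
    moreover have "Sup S \<le> Sup S'"
    proof (rule cSup_least[OF nS])
      fix z assume z: "z \<in> S"
      obtain z' where z': "z' \<in> S'" using False by auto
      have "z' \<le> Sup S'" using z' bS' cSup_upper by blast
      moreover have "s \<le> z'" using z' by (auto simp: S'_def)
      ultimately have zs: "s \<le> Sup S'" by linarith
      have "z \<in> {0..s} \<or> z \<in> S'" using z sub2 by blast
      then show "z \<le> Sup S'"
      proof
        assume "z \<in> {0..s}" thus ?thesis using zs by simp
      next
        assume "z \<in> S'" thus ?thesis using bS' by (rule cSup_upper)
      qed
    qed
    ultimately have "Sup S = Sup S'" by simp
    then show ?thesis using False nS p1 p2 by simp
  qed
qed


locale cfg =
  fixes f g :: "real \<Rightarrow> real" and s t a b :: real
  assumes mono: "strict_mono_on {0..1} f"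
    and s0: "0 \<le> s" and st: "s < t" and t1: "t \<le> 1" and ab: "a < b"
    and below: "\<And>z. 0 \<le> z \<Longrightarrow> z < s \<Longrightarrow> f z < a"
    and gt_a: "\<And>z. s < z \<Longrightarrow> z \<le> 1 \<Longrightarrow> a < f z"
    and lt_b: "\<And>z. 0 \<le> z \<Longrightarrow> z < t \<Longrightarrow> f z < b"
    and gs: "g s = (if a \<le> f s then f s else a)"
    and gt: "g t = (if f t \<le> b then f t else b)"
    and gmid: "\<And>z. s < z \<Longrightarrow> z < t \<Longrightarrow> g z = f z"
begin

lemma fless: "0 \<le> x \<Longrightarrow> x < y \<Longrightarrow> y \<le> 1 \<Longrightarrow> f x < f y"
  using mono by (auto simp: strict_mono_on_def)


lemma caseA:
  assumes "a \<le> w" "w \<le> f t" "b < f t \<Longrightarrow> w \<le> b"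
  shows "pinv 0 1 f w = pinv s t g w"
proof (rule pinv_transfer[OF s0 st t1])
  fix z assume z: "0 \<le> z" "z \<le> 1" "z \<noteq> s"
  consider "z < s" | "s < z" "z < t" | "z = t" | "t < z" using z by linarith
  then show "(f z < w \<longleftrightarrow> (z < s \<or> (s < z \<and> z \<le> t \<and> g z < w)))"
  proof cases
    case 1
    have "f z < w" using below[of z] z(1) 1 assms(1) by linarith
    thus ?thesis using 1 by simp
  next
    case 2
    have "g z = f z" using gmid 2 by blast
    thus ?thesis using 2 by simp
  next
    case 3
    show ?thesis
    proof (cases "f t \<le> b")
      case True
      then have "g t = f t" using gt by simp
      thus ?thesis using 3 st by simp
    next
      case False
      then have "g t = b" "w \<le> b" using gt assms(3) by auto
      thus ?thesis using 3 st assms(2) by simp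
    qed
  next
    case 4
    have "f t < f z" using fless[of t z] z 4 st s0 by linarith
    thus ?thesis using 4 st assms(2) by simp
  qed
next
  assume "g s < w" thus "f s < w" using gs assms(1) by (simp split: if_splits)
qed

lemma caseB:
  assumes "f s < a" "w = f s" "w' \<le> a"
  shows "pinv 0 1 f w = pinv s t g w'"
proof (rule pinv_transfer[OF s0 st t1])
  fix z assume z: "0 \<le> z" "z \<le> 1" "z \<noteq> s"
  consider "z < s" | "s < z" "z < t" | "z = t" | "t < z" using z by linarith
  then show "(f z < w \<longleftrightarrow> (z < s \<or> (s < z \<and> z \<le> t \<and> g z < w')))"
  proof cases
    case 1
    have "f z < w" using fless[of z s] z(1) 1 assms(2) st t1 by linarith
    thus ?thesis using 1 by simp
  next
    case 2
    have "g z = f z" using gmid 2 by blast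
    moreover have "f s < f z" using fless[of s z] s0 2 z(2) by linarith
    moreover have "a < f z" using gt_a[of z] 2 z(2) by linarith
    ultimately show ?thesis using 2 assms by simp
  next
    case 3
    have "f s < f t" using fless[of s t] s0 st t1 by linarith
    moreover have "a < g t" using gt gt_a[of t] st t1 ab by simp
    ultimately show ?thesis using 3 st assms by simp
  next
    case 4
    have "f s < f z" using fless[of s z] z 4 st s0 by linarith
    thus ?thesis using 4 st assms(2) by simp
  qed
next
  assume "g s < w'" thus "f s < w" using gs assms by (simp split: if_splits)
qed

lemma caseC:
  assumes "b \<le> w" "w \<le> f t" "b < f t" "w' = b"
  shows "pinv 0 1 f w = pinv s t g w'"
proof (rule pinv_transfer[OF s0 st t1])
  fix z assume z: "0 \<le> z" "z \<le> 1" "z \<noteq> s"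
  consider "z < s" | "s < z" "z < t" | "z = t" | "t < z" using z by linarith
  then show "(f z < w \<longleftrightarrow> (z < s \<or> (s < z \<and> z \<le> t \<and> g z < w')))"
  proof cases
    case 1
    have "f z < w" using below[of z] z(1) 1 assms(1) ab by linarith
    thus ?thesis using 1 by simp
  next
    case 2
    have "g z = f z" using gmid 2 by blast
    moreover have "f z < b" using lt_b[of z] 2 s0 by linarith
    ultimately show ?thesis using 2 assms by simp
  next
    case 3
    have "g t = b" using gt assms(3) by simp
    thus ?thesis using 3 st assms by simp
  next
    case 4
    have "f t < f z" using fless[of t z] z 4 st s0 by linarith
    thus ?thesis using 4 st assms(2) by simp
  qed
next
  assume "g s < w'" thus "f s < w" using lt_b[of s] s0 st assms by simp
qed

end


locale ctx =
  fixes A :: "'i set" and a b :: "'i \<Rightarrow> real" and Fs :: "'i \<Rightarrow> real \<Rightarrow> real \<Rightarrow> real"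
    and f :: "real \<Rightarrow> real" and \<beta> :: 'i
  assumes ab_all: "\<forall>\<alpha>\<in>A. 0 \<le> a \<alpha> \<and> a \<alpha> < b \<alpha> \<and> b \<alpha> \<le> 1"
    and disj: "\<forall>\<alpha>\<in>A. \<forall>\<gamma>\<in>A. \<alpha> \<noteq> \<gamma> \<longrightarrow> {a \<alpha><..<b \<alpha>} \<inter> {a \<gamma><..<b \<gamma>} = {}"
    and sub: "\<forall>\<alpha>\<in>A. tsubnorm (Fs \<alpha>)"
    and tn: "tnorm (ordinal_sum A a b Fs)"
    and mono: "strict_mono_on {0..1} f"
    and img: "f ` {0..1} \<subseteq> {0..1}"
    and bA: "\<beta> \<in> A"
    and st: "s_pt f a \<beta> < t_pt f b \<beta>"
begin

abbreviation "OS \<equiv> ordinal_sum A a b Fs"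

lemma witness_false:
  assumes "\<alpha> \<in> A" "\<gamma> \<in> A" "\<alpha> \<noteq> \<gamma>" "a \<alpha> < r" "r < b \<alpha>" "a \<gamma> < r" "r < b \<gamma>"
  shows False
proof -
  have "r \<in> {a \<alpha><..<b \<alpha>} \<inter> {a \<gamma><..<b \<gamma>}" using assms by auto
  thus False using disj assms(1-3) by blast
qed

lemma O_uniq:
  assumes "\<alpha> \<in> A" "\<gamma> \<in> A" "a \<alpha> < p" "p \<le> b \<alpha>" "a \<gamma> < p" "p \<le> b \<gamma>"
  shows "\<alpha> = \<gamma>"
proof (rule ccontr)
  assume "\<alpha> \<noteq> \<gamma>"
  show False by (rule witness_false[OF assms(1,2) \<open>\<alpha> \<noteq> \<gamma>\<close>, of "(max (a \<alpha>) (a \<gamma>) + p)/2"])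
    (use assms in auto)
qed

lemma Gl:
  assumes "\<alpha> \<in> A" "\<gamma> \<in> A" "\<alpha> \<noteq> \<gamma>" "a \<alpha> < a \<gamma>" "a \<gamma> < b \<alpha>"
  shows False
proof -
  have "a \<gamma> < b \<gamma>" using ab_all assms(2) by auto
  show False by (rule witness_false[OF assms(1,2,3), of "(a \<gamma> + min (b \<alpha>) (b \<gamma>))/2"])
    (use assms \<open>a \<gamma> < b \<gamma>\<close> in auto)
qed

lemma Gr:
  assumes "\<alpha> \<in> A" "\<gamma> \<in> A" "\<alpha> \<noteq> \<gamma>" "a \<alpha> < b \<gamma>" "b \<gamma> < b \<alpha>"
  shows False
proof -
  have "a \<gamma> < b \<gamma>" using ab_all assms(2) by auto
  show False by (rule witness_false[OF assms(1,2,3), of "(max (a \<alpha>) (a \<gamma>) + b \<gamma>)/2"])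
    (use assms \<open>a \<gamma> < b \<gamma>\<close> in auto)
qed

lemma OS1:
  assumes "a \<beta> < p" "p \<le> b \<beta>" "a \<beta> < q" "q \<le> b \<beta>"
  shows "OS p q = summand a b Fs \<beta> p q"
proof -
  let ?P = "\<lambda>\<alpha>. \<alpha> \<in> A \<and> p \<in> {a \<alpha><..b \<alpha>} \<and> q \<in> {a \<alpha><..b \<alpha>}"
  have ex: "?P \<beta>" using assms bA by auto
  then have "?P (SOME \<alpha>. ?P \<alpha>)" by (rule someI)
  then have "(SOME \<alpha>. ?P \<alpha>) = \<beta>" using O_uniq[of "SOME \<alpha>. ?P \<alpha>" \<beta> p] bA assms by auto
  moreover have "\<exists>\<alpha>\<in>A. p \<in> {a \<alpha><..b \<alpha>} \<and> q \<in> {a \<alpha><..b \<alpha>}" using ex by blast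
  ultimately show ?thesis unfolding ordinal_sum_def by simp
qed

lemma OS_min:
  assumes "\<not> (\<exists>\<alpha>\<in>A. p \<in> {a \<alpha><..b \<alpha>} \<and> q \<in> {a \<alpha><..b \<alpha>})"
  shows "OS p q = min p q"
  using assms unfolding ordinal_sum_def by auto

lemma OS2:
  assumes "p \<le> a \<beta>" "a \<beta> < q"
  shows "OS p q = min p q"
proof (rule OS_min, rule notI)
  assume "\<exists>\<alpha>\<in>A. p \<in> {a \<alpha><..b \<alpha>} \<and> q \<in> {a \<alpha><..b \<alpha>}"
  then obtain \<alpha> where al: "\<alpha> \<in> A" "a \<alpha> < p" "p \<le> b \<alpha>" "a \<alpha> < q" "q \<le> b \<alpha>" by auto
  show False
  proof (cases "\<alpha> = \<beta>")
    case True thus False using al assms by auto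
  next
    case False
    show False by (rule Gl[OF al(1) bA False]) (use al assms in auto)
  qed
qed

lemma OS3:
  assumes "p < b \<beta>" "b \<beta> < q"
  shows "OS p q = min p q"
proof (rule OS_min, rule notI)
  assume "\<exists>\<alpha>\<in>A. p \<in> {a \<alpha><..b \<alpha>} \<and> q \<in> {a \<alpha><..b \<alpha>}"
  then obtain \<alpha> where al: "\<alpha> \<in> A" "a \<alpha> < p" "p \<le> b \<alpha>" "a \<alpha> < q" "q \<le> b \<alpha>" by auto
  show False
  proof (cases "\<alpha> = \<beta>")
    case True thus False using al assms by auto
  next
    case False
    show False by (rule Gr[OF al(1) bA False]) (use al assms in auto)
  qed
qed

lemma summand_ge:
  assumes "\<alpha> \<in> A" "a \<alpha> \<le> p" "p \<le> b \<alpha>" "a \<alpha> \<le> q" "q \<le> b \<alpha>"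
  shows "a \<alpha> \<le> summand a b Fs \<alpha> p q"
proof -
  have ab: "a \<alpha> < b \<alpha>" using ab_all assms(1) by auto
  have r: "\<forall>x\<in>{0..1}. \<forall>y\<in>{0..1}. Fs \<alpha> x y \<in> {0..1}" using sub assms(1) unfolding tsubnorm_def by blast
  have "(p - a \<alpha>) / (b \<alpha> - a \<alpha>) \<in> {0..1}" "(q - a \<alpha>) / (b \<alpha> - a \<alpha>) \<in> {0..1}"
    using assms ab by (auto simp: divide_simps)
  then have "0 \<le> Fs \<alpha> ((p - a \<alpha>) / (b \<alpha> - a \<alpha>)) ((q - a \<alpha>) / (b \<alpha> - a \<alpha>))" using r by auto
  then show ?thesis unfolding summand_def using ab by simp
qed

lemma OS_le:
  assumes "p \<in> {0..1}" "q \<in> {0..1}"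
  shows "OS p q \<le> p" "OS p q \<le> q"
proof -
  have c: "\<And>x y. x \<in> {0..1} \<Longrightarrow> y \<in> {0..1} \<Longrightarrow> OS x y = OS y x"
   and m: "\<And>x x' y. x \<in> {0..1} \<Longrightarrow> x' \<in> {0..1} \<Longrightarrow> y \<in> {0..1} \<Longrightarrow> x \<le> x' \<Longrightarrow> OS x y \<le> OS x' y"
   and one: "\<And>x. x \<in> {0..1} \<Longrightarrow> OS x 1 = x"
    using tn unfolding tnorm_def by blast+
  have le: "\<And>x y. x \<in> {0..1} \<Longrightarrow> y \<in> {0..1} \<Longrightarrow> OS x y \<le> x"
  proof -
    fix x y :: real assume xy: "x \<in> {0..1}" "y \<in> {0..1}"
    have "OS x y = OS y x" using c xy by blast
    also have "\<dots> \<le> OS 1 x" using m[of y 1 x] xy by auto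
    also have "\<dots> = OS x 1" using c xy by auto
    also have "\<dots> = x" using one xy by blast
    finally show "OS x y \<le> x" .
  qed
  show "OS p q \<le> p" using le assms by blast
  show "OS p q \<le> q" using le[of q p] c[of p q] assms by simp
qed

lemma OS_comm: "p \<in> {0..1} \<Longrightarrow> q \<in> {0..1} \<Longrightarrow> OS p q = OS q p"
  using tn unfolding tnorm_def by blast

lemma OS_ge_b:
  assumes "b \<beta> < q" "q \<le> 1"
  shows "b \<beta> \<le> OS q q"
proof (cases "\<exists>\<alpha>\<in>A. q \<in> {a \<alpha><..b \<alpha>} \<and> q \<in> {a \<alpha><..b \<alpha>}")
  case True
  let ?P = "\<lambda>\<alpha>. \<alpha> \<in> A \<and> q \<in> {a \<alpha><..b \<alpha>} \<and> q \<in> {a \<alpha><..b \<alpha>}"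
  have "?P (SOME \<alpha>. ?P \<alpha>)" using True by (metis (mono_tags, lifting) someI_ex)
  then obtain \<alpha> where al: "\<alpha> = (SOME \<alpha>. ?P \<alpha>)" "\<alpha> \<in> A" "a \<alpha> < q" "q \<le> b \<alpha>" by auto
  have ne: "\<alpha> \<noteq> \<beta>" using al assms by auto
  have "b \<beta> \<le> a \<alpha>"
  proof (rule ccontr)
    assume "\<not> b \<beta> \<le> a \<alpha>"
    then show False using Gr[OF al(2) bA ne] al assms by linarith
  qed
  moreover have "a \<alpha> \<le> summand a b Fs \<alpha> q q" using summand_ge[of \<alpha> q q] al by auto
  moreover have "OS q q = summand a b Fs \<alpha> q q" unfolding ordinal_sum_def using True al(1) by simp
  ultimately show ?thesis by linarith
next
  case False
  then show ?thesis using OS_min[OF False] assms by simp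
qed

end


context ctx begin

abbreviation "sp \<equiv> s_pt f a \<beta>"
abbreviation "tp \<equiv> t_pt f b \<beta>"
abbreviation "gf \<equiv> decomp f a b \<beta>"

lemma fless': "0 \<le> x \<Longrightarrow> x < y \<Longrightarrow> y \<le> 1 \<Longrightarrow> f x < f y"
  using mono by (auto simp: strict_mono_on_def)

lemma st_facts:
  shows s0: "0 \<le> sp" and t1: "tp \<le> 1"
    and below: "\<And>z. 0 \<le> z \<Longrightarrow> z < sp \<Longrightarrow> f z < a \<beta>"
    and gt_a: "\<And>z. sp < z \<Longrightarrow> z \<le> 1 \<Longrightarrow> a \<beta> < f z"
    and lt_b: "\<And>z. 0 \<le> z \<Longrightarrow> z < tp \<Longrightarrow> f z < b \<beta>"
proof -
  define S where "S = {x \<in> {0..1}. a \<beta> \<le> f x}"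
  define T where "T = {x \<in> {0..1}. f x \<le> b \<beta>}"
  have sdef: "sp = (if S = {} then 1 else Inf S)" unfolding s_pt_def S_def ..
  have tdef: "tp = (if T = {} then 0 else Sup T)" unfolding t_pt_def T_def ..
  have bS: "bdd_below S" unfolding S_def by (rule bdd_belowI[of _ 0]) auto
  have bT: "bdd_above T" unfolding T_def by (rule bdd_aboveI[of _ 1]) auto
  show t1: "tp \<le> 1"
  proof (cases "T = {}")
    case True thus ?thesis using tdef by simp
  next
    case False
    have "Sup T \<le> 1" using False by (intro cSup_least) (auto simp: T_def)
    thus ?thesis using tdef False by simp
  qed
  show s0: "0 \<le> sp"
  proof (cases "S = {}")
    case True thus ?thesis using sdef by simp
  next
    case False
    have "0 \<le> Inf S" using False by (intro cInf_greatest) (auto simp: S_def)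
    thus ?thesis using sdef False by simp
  qed
  have Sne: "S \<noteq> {}" using sdef st t1 by (cases "S = {}") auto
  have Tne: "T \<noteq> {}" using tdef st s0 by (cases "T = {}") auto
  have sI: "sp = Inf S" using sdef Sne by simp
  have tS: "tp = Sup T" using tdef Tne by simp
  show "\<And>z. 0 \<le> z \<Longrightarrow> z < sp \<Longrightarrow> f z < a \<beta>"
  proof -
    fix z assume z: "0 \<le> z" "z < sp"
    have "z \<le> 1" using z st t1 by linarith
    show "f z < a \<beta>"
    proof (rule ccontr)
      assume "\<not> f z < a \<beta>"
      then have "z \<in> S" using z \<open>z \<le> 1\<close> by (auto simp: S_def)
      then have "Inf S \<le> z" using bS cInf_lower by blast
      thus False using z sI by linarith
    qed
  qed
  show "\<And>z. sp < z \<Longrightarrow> z \<le> 1 \<Longrightarrow> a \<beta> < f z"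
  proof -
    fix z assume z: "sp < z" "z \<le> 1"
    then obtain x where x: "x \<in> S" "x < z" using cInf_less_iff[OF Sne bS] sI by auto
    have "f x < f z" using x z fless'[of x z] by (auto simp: S_def)
    thus "a \<beta> < f z" using x by (auto simp: S_def)
  qed
  show "\<And>z. 0 \<le> z \<Longrightarrow> z < tp \<Longrightarrow> f z < b \<beta>"
  proof -
    fix z assume z: "0 \<le> z" "z < tp"
    then obtain x where x: "x \<in> T" "z < x" using less_cSup_iff[OF Tne bT] tS by auto
    have "f z < f x" using x z fless'[of z x] by (auto simp: T_def)
    thus "f z < b \<beta>" using x by (auto simp: T_def)
  qed
qed

lemma ab: "a \<beta> < b \<beta>" using ab_all bA by auto

lemma gs: "gf sp = (if a \<beta> \<le> f sp then f sp else a \<beta>)" unfolding decomp_def by simp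
lemma gt: "gf tp = (if f tp \<le> b \<beta> then f tp else b \<beta>)" unfolding decomp_def using st by simp
lemma gmid: "sp < z \<Longrightarrow> z < tp \<Longrightarrow> gf z = f z" unfolding decomp_def by simp

lemma cfg_inst: "cfg f gf sp tp (a \<beta>) (b \<beta>)"
  by (unfold_locales) (use mono s0 st t1 ab below gt_a lt_b gs gt gmid in auto)

lemma grange: "sp \<le> z \<Longrightarrow> z \<le> tp \<Longrightarrow> a \<beta> \<le> gf z \<and> gf z \<le> b \<beta>"
proof -
  assume z: "sp \<le> z" "z \<le> tp"
  consider "z = sp" | "sp < z" "z < tp" | "z = tp" using z by linarith
  then show ?thesis
  proof cases
    case 1 thus ?thesis using gs lt_b[of sp] s0 st ab by auto
  next
    case 2 thus ?thesis using gmid[of z] gt_a[of z] lt_b[of z] s0 t1 by auto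
  next
    case 3 thus ?thesis using gt gt_a[of tp] st t1 ab by auto
  qed
qed

lemma fimg: "0 \<le> z \<Longrightarrow> z \<le> 1 \<Longrightarrow> 0 \<le> f z \<and> f z \<le> 1"
proof -
  assume "0 \<le> z" "z \<le> 1"
  then have "z \<in> {0..1}" by simp
  then have "f z \<in> f ` {0..1}" by (rule imageI)
  then have "f z \<in> {0..1}" using img by (rule subsetD[rotated])
  thus ?thesis by simp
qed

lemma core:
  fixes \<Phi> :: "real \<Rightarrow> real \<Rightarrow> real"
  assumes H0: "\<And>v. a \<beta> \<le> v \<Longrightarrow> v \<le> b \<beta> \<Longrightarrow> \<Phi> (a \<beta>) v = a \<beta>"
    and H1: "\<And>u v. a \<beta> < u \<Longrightarrow> u < b \<beta> \<Longrightarrow> a \<beta> < v \<Longrightarrow> v < b \<beta> \<Longrightarrow> \<Phi> u v = summand a b Fs \<beta> u v"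
    and H2: "\<And>u v. f tp \<le> b \<beta> \<Longrightarrow> a \<beta> < u \<Longrightarrow> u \<le> b \<beta> \<Longrightarrow> a \<beta> < v \<Longrightarrow> v \<le> b \<beta> \<Longrightarrow> \<Phi> u v = summand a b Fs \<beta> u v"
    and H3: "\<And>u. b \<beta> < f tp \<Longrightarrow> a \<beta> \<le> u \<Longrightarrow> u \<le> b \<beta> \<Longrightarrow> \<Phi> u (b \<beta>) = u"
    and Hc: "\<And>u v. a \<beta> \<le> u \<Longrightarrow> u \<le> b \<beta> \<Longrightarrow> a \<beta> \<le> v \<Longrightarrow> v \<le> b \<beta> \<Longrightarrow> \<Phi> u v = \<Phi> v u"
    and x: "sp \<le> x" "x \<le> tp" and y: "sp \<le> y" "y \<le> tp" and ne: "(x, y) \<noteq> (sp, sp)"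
  shows "pinv 0 1 f (OS (f x) (f y)) = pinv sp tp gf (\<Phi> (gf x) (gf y))"
proof -
  interpret C: cfg f gf sp tp "a \<beta>" "b \<beta>" by (rule cfg_inst)
  have key: "pinv 0 1 f (OS (f x) (f y)) = pinv sp tp gf (\<Phi> (gf x) (gf y))"
    if x: "sp \<le> x" "x \<le> y" and y: "y \<le> tp" "sp < y" for x y
  proof -
    have x01: "0 \<le> x" "x \<le> 1" "0 \<le> y" "y \<le> 1" using x y s0 t1 by linarith+
    have fx: "0 \<le> f x \<and> f x \<le> 1" "0 \<le> f y \<and> f y \<le> 1" using fimg x01 by auto
    have ay: "a \<beta> < f y" using gt_a y x01 by blast
    have fyt: "f y \<le> f tp" using fless'[of y tp] y x01 t1 by (cases "y = tp") auto
    have gy: "a \<beta> \<le> gf y \<and> gf y \<le> b \<beta>" using grange y x by auto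
    have M: "pinv 0 1 f (OS (f x) (f y)) = pinv sp tp gf (\<Phi> (gf x) (gf y))"
      if m: "a \<beta> < f x" "f x < b \<beta>" "gf x = f x"
    proof -
      consider "y < tp" | "y = tp" "f tp \<le> b \<beta>" | "y = tp" "b \<beta> < f tp" using y by linarith
      then show ?thesis
      proof cases
        case 1
        have g: "gf y = f y" using gmid 1 y by blast
        have fyb: "f y < b \<beta>" using lt_b 1 x01 by blast
        have w: "OS (f x) (f y) = summand a b Fs \<beta> (f x) (f y)" using OS1 m ay fyb by auto
        have w': "\<Phi> (gf x) (gf y) = summand a b Fs \<beta> (f x) (f y)" using H1 m ay fyb g by auto
        have "a \<beta> \<le> summand a b Fs \<beta> (f x) (f y)" using summand_ge[OF bA] m ay fyb by auto
        moreover have "OS (f x) (f y) \<le> f x" "OS (f x) (f y) \<le> f y" using OS_le fx by auto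
        ultimately show ?thesis using w w' C.caseA[of "OS (f x) (f y)"] fyt m by auto
      next
        case 2
        have g: "gf y = f y" using gt 2 by simp
        have w: "OS (f x) (f y) = summand a b Fs \<beta> (f x) (f y)" using OS1 m ay 2 by auto
        have w': "\<Phi> (gf x) (gf y) = summand a b Fs \<beta> (f x) (f y)" using H2 m ay 2 g by auto
        have "a \<beta> \<le> summand a b Fs \<beta> (f x) (f y)" using summand_ge[OF bA] m ay 2 by auto
        moreover have "OS (f x) (f y) \<le> f y" using OS_le fx by auto
        ultimately show ?thesis using w w' C.caseA[of "OS (f x) (f y)"] fyt 2 by auto
      next
        case 3
        have g: "gf y = b \<beta>" using gt 3 by simp
        have w: "OS (f x) (f y) = f x" using OS3[of "f x" "f y"] m 3 by auto
        have w': "\<Phi> (gf x) (gf y) = f x" using H3[of "f x"] m 3 g by auto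
        show ?thesis using w w' C.caseA[of "f x"] m 3 by auto
      qed
    qed
    consider "x = sp" | "sp < x" "x < tp" | "x = tp" using x y by linarith
    then show ?thesis
    proof cases
      case 1
      consider "f sp < a \<beta>" | "f sp = a \<beta>" | "a \<beta> < f sp" by linarith
      then show ?thesis
      proof cases
        case c: 1
        have g: "gf x = a \<beta>" using gs c 1 by simp
        have w: "OS (f x) (f y) = f sp" using OS2[of "f x" "f y"] c 1 ay by auto
        have w': "\<Phi> (gf x) (gf y) = a \<beta>" using H0 g gy by auto
        show ?thesis using w w' C.caseB[of "f sp" "a \<beta>"] c by auto
      next
        case c: 2
        have g: "gf x = a \<beta>" using gs c 1 by simp
        have w: "OS (f x) (f y) = a \<beta>" using OS2[of "f x" "f y"] c 1 ay by auto
        have w': "\<Phi> (gf x) (gf y) = a \<beta>" using H0 g gy by auto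
        have "a \<beta> < f tp" using gt_a[of tp] st t1 by blast
        then show ?thesis using w w' C.caseA[of "a \<beta>"] ab by auto
      next
        case c: 3
        have g: "gf x = f x" using gs c 1 by simp
        have "f sp < b \<beta>" using lt_b[of sp] s0 st by blast
        then show ?thesis using M g c 1 by auto
      qed
    next
      case 2
      have g: "gf x = f x" using gmid 2 by blast
      show ?thesis using M g gt_a[of x] lt_b[of x] 2 x01 by auto
    next
      case 3
      have yt: "y = tp" using 3 x y by linarith
      have ft01: "0 \<le> f tp" "f tp \<le> 1" using fx 3 by auto
      show ?thesis
      proof (cases "f tp \<le> b \<beta>")
        case True
        have g: "gf tp = f tp" using gt True by simp
        have at: "a \<beta> < f tp" using gt_a[of tp] st t1 by blast
        have w: "OS (f tp) (f tp) = summand a b Fs \<beta> (f tp) (f tp)" using OS1 at True by auto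
        have w': "\<Phi> (gf tp) (gf tp) = summand a b Fs \<beta> (f tp) (f tp)" using H2 at True g by auto
        have "a \<beta> \<le> summand a b Fs \<beta> (f tp) (f tp)" using summand_ge[OF bA] at True by auto
        moreover have "OS (f tp) (f tp) \<le> f tp" using OS_le ft01 by auto
        ultimately show ?thesis using w w' C.caseA[of "OS (f tp) (f tp)"] True 3 yt by auto
      next
        case False
        have g: "gf tp = b \<beta>" using gt False by simp
        have w': "\<Phi> (gf tp) (gf tp) = b \<beta>" using H3[of "b \<beta>"] False g ab by auto
        have "b \<beta> \<le> OS (f tp) (f tp)" using OS_ge_b False ft01 by auto
        moreover have "OS (f tp) (f tp) \<le> f tp" using OS_le ft01 by auto
        ultimately show ?thesis using w' C.caseC[of "OS (f tp) (f tp)" "b \<beta>"] False 3 yt by auto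
      qed
    qed
  qed
  show ?thesis
  proof (cases "x \<le> y")
    case True
    have "sp < y" using True ne x y by (cases "y = sp") auto
    then show ?thesis using key[of x y] True x y by auto
  next
    case False
    have "sp < x" using False y by linarith
    have x01: "0 \<le> x" "x \<le> 1" "0 \<le> y" "y \<le> 1" using x y s0 t1 by linarith+
    have "OS (f x) (f y) = OS (f y) (f x)" using OS_comm fimg x01 by auto
    moreover have "\<Phi> (gf x) (gf y) = \<Phi> (gf y) (gf x)" using Hc grange x y by auto
    ultimately show ?thesis using key[of y x] False x y \<open>sp < x\<close> by auto
  qed
qed

end


context ctx begin

lemma sub_b: "tsubnorm (Fs \<beta>)" using sub bA by auto

lemma unit_arg: "a \<beta> \<le> u \<Longrightarrow> u \<le> b \<beta> \<Longrightarrow> (u - a \<beta>) / (b \<beta> - a \<beta>) \<in> {0..1}"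
  using ab by (auto simp: divide_simps)

lemma sH0: "a \<beta> \<le> v \<Longrightarrow> v \<le> b \<beta> \<Longrightarrow> summand a b Fs \<beta> (a \<beta>) v = a \<beta>"
proof -
  assume v: "a \<beta> \<le> v" "v \<le> b \<beta>"
  let ?v = "(v - a \<beta>) / (b \<beta> - a \<beta>)"
  have v1: "?v \<in> {0..1}" using unit_arg v by blast
  have "Fs \<beta> 0 ?v \<le> min 0 ?v" "Fs \<beta> 0 ?v \<in> {0..1}" using sub_b v1 unfolding tsubnorm_def by auto
  then have "Fs \<beta> 0 ?v = 0" by auto
  thus ?thesis unfolding summand_def by simp
qed

lemma sHc: "a \<beta> \<le> u \<Longrightarrow> u \<le> b \<beta> \<Longrightarrow> a \<beta> \<le> v \<Longrightarrow> v \<le> b \<beta> \<Longrightarrow> summand a b Fs \<beta> u v = summand a b Fs \<beta> v u"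
proof -
  assume uv: "a \<beta> \<le> u" "u \<le> b \<beta>" "a \<beta> \<le> v" "v \<le> b \<beta>"
  have "(u - a \<beta>) / (b \<beta> - a \<beta>) \<in> {0..1}" "(v - a \<beta>) / (b \<beta> - a \<beta>) \<in> {0..1}" using unit_arg uv by auto
  moreover have "\<forall>x\<in>{0..1}. \<forall>y\<in>{0..1}. Fs \<beta> x y = Fs \<beta> y x" using sub_b unfolding tsubnorm_def by blast
  ultimately have "Fs \<beta> ((u - a \<beta>) / (b \<beta> - a \<beta>)) ((v - a \<beta>) / (b \<beta> - a \<beta>)) = Fs \<beta> ((v - a \<beta>) / (b \<beta> - a \<beta>)) ((u - a \<beta>) / (b \<beta> - a \<beta>))" by blast
  then show ?thesis unfolding summand_def by simp
qed

lemma sH3: "tnorm (Fs \<beta>) \<Longrightarrow> a \<beta> \<le> u \<Longrightarrow> u \<le> b \<beta> \<Longrightarrow> summand a b Fs \<beta> u (b \<beta>) = u"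
proof -
  assume tn': "tnorm (Fs \<beta>)" and u: "a \<beta> \<le> u" "u \<le> b \<beta>"
  let ?u = "(u - a \<beta>) / (b \<beta> - a \<beta>)"
  have "?u \<in> {0..1}" using unit_arg u by blast
  then have "Fs \<beta> ?u 1 = ?u" using tn' unfolding tnorm_def by blast
  moreover have "(b \<beta> - a \<beta>) / (b \<beta> - a \<beta>) = 1" using ab by simp
  ultimately show ?thesis unfolding summand_def using ab by simp
qed

lemma lH0: "a \<beta> \<le> v \<Longrightarrow> v \<le> b \<beta> \<Longrightarrow> summand_low a b Fs \<beta> (a \<beta>) v = a \<beta>"
  unfolding summand_low_def using sH0 by auto

lemma lHc: "a \<beta> \<le> u \<Longrightarrow> u \<le> b \<beta> \<Longrightarrow> a \<beta> \<le> v \<Longrightarrow> v \<le> b \<beta> \<Longrightarrow> summand_low a b Fs \<beta> u v = summand_low a b Fs \<beta> v u"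
proof -
  assume uv: "a \<beta> \<le> u" "u \<le> b \<beta>" "a \<beta> \<le> v" "v \<le> b \<beta>"
  have e: "summand a b Fs \<beta> u v = summand a b Fs \<beta> v u" using sHc[OF uv] .
  show ?thesis unfolding summand_low_def using e by (simp add: min.commute conj_commute)
qed

lemma lH3: "u \<le> b \<beta> \<Longrightarrow> summand_low a b Fs \<beta> u (b \<beta>) = u"
  unfolding summand_low_def by auto

end
theorem proposition5p2:
  fixes A :: "'i set" and a b :: "'i \<Rightarrow> real" and Fs :: "'i \<Rightarrow> real \<Rightarrow> real \<Rightarrow> real"
    and f :: "real \<Rightarrow> real" and \<beta> :: 'i
  assumes "A \<noteq> {}"
    and "\<forall>\<alpha>\<in>A. 0 \<le> a \<alpha> \<and> a \<alpha> < b \<alpha> \<and> b \<alpha> \<le> 1"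
    and "\<forall>\<alpha>\<in>A. \<forall>\<gamma>\<in>A. \<alpha> \<noteq> \<gamma> \<longrightarrow> {a \<alpha><..<b \<alpha>} \<inter> {a \<gamma><..<b \<gamma>} = {}"
    and "\<forall>\<alpha>\<in>A. tsubnorm (Fs \<alpha>)"
    and "tnorm (ordinal_sum A a b Fs)"
    and "strict_mono_on {0..1} f"
    and "f ` {0..1} \<subseteq> {0..1}"
    and "B_set A f a b \<noteq> {}"
    and "\<beta> \<in> B_set A f a b"
  shows
   "(tnorm (Fs \<beta>) \<longrightarrow>
      (\<forall>x\<in>{s_pt f a \<beta>..t_pt f b \<beta>}. \<forall>y\<in>{s_pt f a \<beta>..t_pt f b \<beta>}.
         (x, y) \<noteq> (s_pt f a \<beta>, s_pt f a \<beta>) \<longrightarrow>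
         Tgen A a b Fs f x y = Tbeta a b Fs f \<beta> x y))
  \<and> (proper_tsubnorm (Fs \<beta>) \<and> f (t_pt f b \<beta>) \<le> b \<beta> \<longrightarrow>
      (\<forall>x\<in>{s_pt f a \<beta>..t_pt f b \<beta>}. \<forall>y\<in>{s_pt f a \<beta>..t_pt f b \<beta>}.
         (x, y) \<noteq> (s_pt f a \<beta>, s_pt f a \<beta>) \<longrightarrow>
         Tgen A a b Fs f x y = Tbeta a b Fs f \<beta> x y))
  \<and> (proper_tsubnorm (Fs \<beta>) \<and> f (t_pt f b \<beta>) > b \<beta> \<longrightarrow>
      (\<forall>x\<in>{s_pt f a \<beta>..t_pt f b \<beta>}. \<forall>y\<in>{s_pt f a \<beta>..t_pt f b \<beta>}.
         (x, y) \<noteq> (s_pt f a \<beta>, s_pt f a \<beta>) \<longrightarrow>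
         Tgen A a b Fs f x y = Tbeta_low a b Fs f \<beta> x y))"
proof -
  have bA: "\<beta> \<in> A" and stl: "s_pt f a \<beta> < t_pt f b \<beta>" using assms(9) unfolding B_set_def by auto
  interpret ctx A a b Fs f \<beta>
    by (unfold_locales) (use assms bA stl in auto)
  have P: "Tgen A a b Fs f x y = pinv sp tp gf (\<Phi> (gf x) (gf y))"
    if H0: "\<And>v. a \<beta> \<le> v \<Longrightarrow> v \<le> b \<beta> \<Longrightarrow> \<Phi> (a \<beta>) v = a \<beta>"
    and H1: "\<And>u v. a \<beta> < u \<Longrightarrow> u < b \<beta> \<Longrightarrow> a \<beta> < v \<Longrightarrow> v < b \<beta> \<Longrightarrow> \<Phi> u v = summand a b Fs \<beta> u v"
    and H2: "\<And>u v. f tp \<le> b \<beta> \<Longrightarrow> a \<beta> < u \<Longrightarrow> u \<le> b \<beta> \<Longrightarrow> a \<beta> < v \<Longrightarrow> v \<le> b \<beta> \<Longrightarrow> \<Phi> u v = summand a b Fs \<beta> u v"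
    and H3: "\<And>u. b \<beta> < f tp \<Longrightarrow> a \<beta> \<le> u \<Longrightarrow> u \<le> b \<beta> \<Longrightarrow> \<Phi> u (b \<beta>) = u"
    and Hc: "\<And>u v. a \<beta> \<le> u \<Longrightarrow> u \<le> b \<beta> \<Longrightarrow> a \<beta> \<le> v \<Longrightarrow> v \<le> b \<beta> \<Longrightarrow> \<Phi> u v = \<Phi> v u"
    and xy: "x \<in> {sp..tp}" "y \<in> {sp..tp}" "(x, y) \<noteq> (sp, sp)"
    for \<Phi> :: "real \<Rightarrow> real \<Rightarrow> real" and x y
  proof -
    have x: "sp \<le> x" "x \<le> tp" and y: "sp \<le> y" "y \<le> tp" using xy(1,2) by auto
    show ?thesis unfolding Tgen_def by (rule core[OF H0 H1 H2 H3 Hc x y xy(3)])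
  qed
  show ?thesis
  proof (intro conjI impI ballI)
    fix x y assume tb: "tnorm (Fs \<beta>)" and xy: "x \<in> {sp..tp}" "y \<in> {sp..tp}" "(x, y) \<noteq> (sp, sp)"
    show "Tgen A a b Fs f x y = Tbeta a b Fs f \<beta> x y"
      unfolding Tbeta_def
    proof (rule P[OF _ _ _ _ _ xy])
      show "\<And>v. a \<beta> \<le> v \<Longrightarrow> v \<le> b \<beta> \<Longrightarrow> summand a b Fs \<beta> (a \<beta>) v = a \<beta>" by (rule sH0)
      show "\<And>u v. a \<beta> < u \<Longrightarrow> u < b \<beta> \<Longrightarrow> a \<beta> < v \<Longrightarrow> v < b \<beta> \<Longrightarrow> summand a b Fs \<beta> u v = summand a b Fs \<beta> u v" by (rule refl)
      show "\<And>u v. f tp \<le> b \<beta> \<Longrightarrow> a \<beta> < u \<Longrightarrow> u \<le> b \<beta> \<Longrightarrow> a \<beta> < v \<Longrightarrow> v \<le> b \<beta> \<Longrightarrow> summand a b Fs \<beta> u v = summand a b Fs \<beta> u v" by (rule refl)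
      show "\<And>u. b \<beta> < f tp \<Longrightarrow> a \<beta> \<le> u \<Longrightarrow> u \<le> b \<beta> \<Longrightarrow> summand a b Fs \<beta> u (b \<beta>) = u" by (rule sH3[OF tb])
      show "\<And>u v. a \<beta> \<le> u \<Longrightarrow> u \<le> b \<beta> \<Longrightarrow> a \<beta> \<le> v \<Longrightarrow> v \<le> b \<beta> \<Longrightarrow> summand a b Fs \<beta> u v = summand a b Fs \<beta> v u" by (rule sHc)
    qed
  next
    fix x y assume h: "proper_tsubnorm (Fs \<beta>) \<and> f tp \<le> b \<beta>" and xy: "x \<in> {sp..tp}" "y \<in> {sp..tp}" "(x, y) \<noteq> (sp, sp)"
    show "Tgen A a b Fs f x y = Tbeta a b Fs f \<beta> x y"
      unfolding Tbeta_def
    proof (rule P[OF _ _ _ _ _ xy])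
      show "\<And>v. a \<beta> \<le> v \<Longrightarrow> v \<le> b \<beta> \<Longrightarrow> summand a b Fs \<beta> (a \<beta>) v = a \<beta>" by (rule sH0)
      show "\<And>u v. a \<beta> < u \<Longrightarrow> u < b \<beta> \<Longrightarrow> a \<beta> < v \<Longrightarrow> v < b \<beta> \<Longrightarrow> summand a b Fs \<beta> u v = summand a b Fs \<beta> u v" by (rule refl)
      show "\<And>u v. f tp \<le> b \<beta> \<Longrightarrow> a \<beta> < u \<Longrightarrow> u \<le> b \<beta> \<Longrightarrow> a \<beta> < v \<Longrightarrow> v \<le> b \<beta> \<Longrightarrow> summand a b Fs \<beta> u v = summand a b Fs \<beta> u v" by (rule refl)
      show "\<And>u. b \<beta> < f tp \<Longrightarrow> a \<beta> \<le> u \<Longrightarrow> u \<le> b \<beta> \<Longrightarrow> summand a b Fs \<beta> u (b \<beta>) = u" using h by linarith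
      show "\<And>u v. a \<beta> \<le> u \<Longrightarrow> u \<le> b \<beta> \<Longrightarrow> a \<beta> \<le> v \<Longrightarrow> v \<le> b \<beta> \<Longrightarrow> summand a b Fs \<beta> u v = summand a b Fs \<beta> v u" by (rule sHc)
    qed
  next
    fix x y assume h: "proper_tsubnorm (Fs \<beta>) \<and> b \<beta> < f tp" and xy: "x \<in> {sp..tp}" "y \<in> {sp..tp}" "(x, y) \<noteq> (sp, sp)"
    show "Tgen A a b Fs f x y = Tbeta_low a b Fs f \<beta> x y"
      unfolding Tbeta_low_def
    proof (rule P[OF _ _ _ _ _ xy])
      show "\<And>v. a \<beta> \<le> v \<Longrightarrow> v \<le> b \<beta> \<Longrightarrow> summand_low a b Fs \<beta> (a \<beta>) v = a \<beta>" by (rule lH0)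
      show "\<And>u v. a \<beta> < u \<Longrightarrow> u < b \<beta> \<Longrightarrow> a \<beta> < v \<Longrightarrow> v < b \<beta> \<Longrightarrow> summand_low a b Fs \<beta> u v = summand a b Fs \<beta> u v" unfolding summand_low_def by simp
      show "\<And>u v. f tp \<le> b \<beta> \<Longrightarrow> a \<beta> < u \<Longrightarrow> u \<le> b \<beta> \<Longrightarrow> a \<beta> < v \<Longrightarrow> v \<le> b \<beta> \<Longrightarrow> summand_low a b Fs \<beta> u v = summand a b Fs \<beta> u v" using h by linarith
      show "\<And>u. b \<beta> < f tp \<Longrightarrow> a \<beta> \<le> u \<Longrightarrow> u \<le> b \<beta> \<Longrightarrow> summand_low a b Fs \<beta> u (b \<beta>) = u" by (rule lH3)
      show "\<And>u v. a \<beta> \<le> u \<Longrightarrow> u \<le> b \<beta> \<Longrightarrow> a \<beta> \<le> v \<Longrightarrow> v \<le> b \<beta> \<Longrightarrow> summand_low a b Fs \<beta> u v = summand_low a b Fs \<beta> v u" by (rule lHc)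
    qed
  qed
qed

end
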